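(* Let $\sigma_0,\sigma_\epsilon>0$ with $\sigma_0\neq\sigma_\epsilon$, $\theta_0\in\mathbb{R}$, prior $\Theta\sim\mathrm{Laplace}(\theta_0,\sigma_0)$, signal $X=\Theta+\epsilon$ with $\epsilon\sim\mathrm{Laplace}(0,\sigma_\epsilon)$ independent of $\Theta$, and let $\theta_1(x)=\mathbb{E}[\Theta\mid X=x]$. Then the DeGroot coefficient $\omega=\frac{d\theta_1}{dx}\big|_{x=\theta_0}$ is $$\omega=\frac{\sigma_0}{\sigma_0+\sigma_\epsilon}.$$
   Context: $\mathrm{Laplace}(\mu,s)$ has density $t\mapsto\frac{1}{2s}e^{-|t-\mu|/s}$. The posterior mean is $\theta_1(x)=\frac{\int\theta f_\Theta(\theta)l_\epsilon(x-\theta)d\theta}{\int f_\Theta(\theta)l_\epsilon(x-\theta)d\theta}$. *)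

theory Defs
  imports "HOL-Analysis.Analysis"
begin

definition laplace_density :: "real \<Rightarrow> real \<Rightarrow> real \<Rightarrow> real" where
  "laplace_density mu s t = exp (- \<bar>t - mu\<bar> / s) / (2 * s)"

definition posterior_mean :: "real \<Rightarrow> real \<Rightarrow> real \<Rightarrow> real \<Rightarrow> real" where
  "posterior_mean theta0 sigma0 sigmaeps x =
     (\<integral>\<theta>. \<theta> * laplace_density theta0 sigma0 \<theta> * laplace_density 0 sigmaeps (x - \<theta>) \<partial>lborel) /
     (\<integral>\<theta>. laplace_density theta0 sigma0 \<theta> * laplace_density 0 sigmaeps (x - \<theta>) \<partial>lborel)"

end

theory Submission
  imports Defs "HOL-Probability.Distributions"
begin

lemma half_int:
  fixes c :: real assumes c: "c > 0"
  shows "(\<integral>\<^sup>+u. ennreal (\<bar>u\<bar>^k * exp (- c * \<bar>u\<bar>)) * indicator {0..} u \<partial>lborel)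
         = ennreal (fact k / c^(k+1))"
proof -
  have "(\<integral>\<^sup>+u. ennreal (\<bar>u\<bar>^k * exp (- c * \<bar>u\<bar>)) * indicator {0..} u \<partial>lborel)
     = ennreal \<bar>1/c\<bar> * (\<integral>\<^sup>+x. ennreal (\<bar>0 + 1/c*x\<bar>^k * exp (- c * \<bar>0 + 1/c*x\<bar>)) * indicator {0..} (0 + 1/c*x) \<partial>lborel)"
    by (rule nn_integral_real_affine) (use c in auto)
  also have "(\<lambda>x. ennreal (\<bar>0 + 1/c*x\<bar>^k * exp (- c * \<bar>0 + 1/c*x\<bar>)) * indicator {0..} (0 + 1/c*x))
     = (\<lambda>x. ennreal (1/c^k) * (ennreal (x^k * exp (-x)) * indicator {0..} x))"
    using c by (auto simp: fun_eq_iff ennreal_mult[symmetric] power_divide zero_le_divide_iff split: split_indicator)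
  also have "(\<integral>\<^sup>+x. ennreal (1/c^k) * (ennreal (x^k * exp (-x)) * indicator {0..} x) \<partial>lborel)
       = ennreal (1/c^k) * ennreal (fact k)"
    by (subst nn_integral_cmult) (auto simp: nn_intergal_power_times_exp_Ici)
  also have "ennreal \<bar>1/c\<bar> * (ennreal (1/c^k) * ennreal (fact k)) = ennreal (fact k / c^(k+1))"
    using c by (simp add: ennreal_mult''[symmetric] ennreal_of_nat_eq_real_of_nat field_simps)
  finally show ?thesis .
qed

lemma full_nn_int:
  fixes c :: real assumes c: "c > 0"
  shows "(\<integral>\<^sup>+u. ennreal (\<bar>u\<bar>^k * exp (- c * \<bar>u\<bar>)) \<partial>lborel) = ennreal (2 * fact k / c^(k+1))"
proof -
  let ?f = "\<lambda>u::real. ennreal (\<bar>u\<bar>^k * exp (- c * \<bar>u\<bar>))"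
  have "(\<integral>\<^sup>+u. ?f u \<partial>lborel) = (\<integral>\<^sup>+u. ?f u * indicator {0..} u + ?f u * indicator {..0} u \<partial>lborel)"
    by (rule nn_integral_cong_AE) (use AE_lborel_singleton[of "0::real"] in \<open>auto split: split_indicator\<close>)
  also have "\<dots> = (\<integral>\<^sup>+u. ?f u * indicator {0..} u \<partial>lborel) + (\<integral>\<^sup>+u. ?f u * indicator {..0} u \<partial>lborel)"
    by (rule nn_integral_add) auto
  also have "(\<integral>\<^sup>+u. ?f u * indicator {..0} u \<partial>lborel) = ennreal \<bar>-1\<bar> * (\<integral>\<^sup>+u. ?f (0 + -1*u) * indicator {..0} (0 + -1*u) \<partial>lborel)"
    by (rule nn_integral_real_affine) auto
  also have "\<dots> = (\<integral>\<^sup>+u. ?f u * indicator {0..} u \<partial>lborel)"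
    by (auto intro!: nn_integral_cong split: split_indicator)
  finally have "(\<integral>\<^sup>+u. ?f u \<partial>lborel) = ennreal (fact k / c^(k+1)) + ennreal (fact k / c^(k+1))"
    using half_int[OF c, of k] by simp
  also have "\<dots> = ennreal (fact k / c^(k+1) + fact k / c^(k+1))"
    using c by (subst ennreal_plus) auto
  finally show ?thesis by simp
qed

lemma hbi:
  fixes c :: real assumes c: "c > 0"
  shows "has_bochner_integral lborel (\<lambda>u. \<bar>u\<bar>^k * exp (- c * \<bar>u\<bar>)) (2 * fact k / c^(k+1))"
  by (rule has_bochner_integral_nn_integral) (use c full_nn_int[OF c] in auto)

lemma odd_int0:
  fixes c :: real
  shows "(\<integral>u. u * exp (- c * \<bar>u\<bar>) \<partial>lborel) = 0"
proof -
  have "(\<integral>u. u * exp (- c * \<bar>u\<bar>) \<partial>lborel) = \<bar>-1\<bar> *\<^sub>R (\<integral>u. (0 + -1*u) * exp (- c * \<bar>0 + -1*u\<bar>) \<partial>lborel)"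
    by (rule lborel_integral_real_affine) auto
  also have "\<dots> = - (\<integral>u. u * exp (- c * \<bar>u\<bar>) \<partial>lborel)"
    by simp
  finally show ?thesis by simp
qed

definition KK :: "real \<Rightarrow> real \<Rightarrow> real \<Rightarrow> real \<Rightarrow> real" where
  "KK a b y u = exp (- \<bar>u\<bar> / a) * exp (- \<bar>y - u\<bar> / b)"

definition NN :: "real \<Rightarrow> real \<Rightarrow> real \<Rightarrow> real" where
  "NN a b y = (\<integral>u. u * KK a b y u \<partial>lborel)"

definition DD :: "real \<Rightarrow> real \<Rightarrow> real \<Rightarrow> real" where
  "DD a b y = (\<integral>u. KK a b y u \<partial>lborel)"

lemma KK_meas[measurable]: "(\<lambda>u. KK a b y u) \<in> borel_measurable borel"
  unfolding KK_def by measurable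

lemma exp_diff_bound:
  fixes s t :: real
  shows "\<bar>exp s - exp t\<bar> \<le> \<bar>s - t\<bar> * exp (max s t)"
proof -
  have *: "exp s - exp t \<le> (s - t) * exp s" if "t \<le> s" for s t :: real
  proof -
    have "1 + (t - s) \<le> exp (t - s)" by (rule exp_ge_add_one_self)
    then have "exp s * (1 + (t - s)) \<le> exp s * exp (t - s)" by (intro mult_left_mono) auto
    also have "exp s * exp (t - s) = exp t" by (simp add: exp_add[symmetric])
    finally show ?thesis by (simp add: algebra_simps)
  qed
  show ?thesis
  proof (cases "t \<le> s")
    case True
    then show ?thesis using *[OF True] by (auto simp: max_def)
  next
    case False
    then show ?thesis using *[of s t] by (auto simp: max_def abs_if)
  qed
qed

context
  fixes a b :: real assumes a: "a > 0" and b: "b > 0"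
begin

lemma K_int: "integrable lborel (\<lambda>u. KK a b y u)"
proof (rule Bochner_Integration.integrable_bound)
  show "integrable lborel (\<lambda>u. \<bar>u\<bar>^0 * exp (- (1/a) * \<bar>u\<bar>))"
    using hbi[of "1/a" 0] a by (auto simp: has_bochner_integral_iff)
  show "AE u in lborel. norm (KK a b y u) \<le> norm (\<bar>u\<bar>^0 * exp (- (1/a) * \<bar>u\<bar>))"
    using a b by (auto simp: KK_def mult_le_cancel_left1)
qed auto

lemma uK_int: "integrable lborel (\<lambda>u. u * KK a b y u)"
proof (rule Bochner_Integration.integrable_bound)
  show "integrable lborel (\<lambda>u. \<bar>u\<bar>^1 * exp (- (1/a) * \<bar>u\<bar>))"
    using hbi[of "1/a" 1] a by (auto simp: has_bochner_integral_iff)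
  show "AE u in lborel. norm (u * KK a b y u) \<le> norm (\<bar>u\<bar>^1 * exp (- (1/a) * \<bar>u\<bar>))"
    using a b by (auto simp: KK_def abs_mult intro!: mult_left_mono mult_le_cancel_left1[THEN iffD2])
qed auto


lemma KK0: "KK a b 0 u = exp (- (1/a + 1/b) * \<bar>u\<bar>)"
  by (simp add: KK_def exp_add[symmetric] field_simps)

lemma NN0: "NN a b 0 = 0"
  unfolding NN_def KK0 by (rule odd_int0)

lemma DD0: "DD a b 0 = 2 / (1/a + 1/b)"
proof -
  have "0 < 1/a + 1/b" using a b by (intro add_pos_pos) auto
  then show ?thesis using hbi[of "1/a + 1/b" 0] unfolding DD_def KK0
    by (simp add: has_bochner_integral_iff)
qed

lemma DD_pos: "DD a b y > 0"
proof -
  let ?c = "1/a + 1/b"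
  have "0 < ?c" using a b by (intro add_pos_pos) auto
  then have "0 < exp (- \<bar>y\<bar> / b) * (2 / ?c)" by (intro mult_pos_pos) auto
  also have "exp (- \<bar>y\<bar> / b) * (2 / ?c) = (\<integral>u. exp (- \<bar>y\<bar> / b) * (\<bar>u\<bar>^0 * exp (- ?c * \<bar>u\<bar>)) \<partial>lborel)"
    using hbi[of ?c 0] \<open>0 < ?c\<close> by (simp add: has_bochner_integral_iff)
  also have "\<dots> \<le> DD a b y"
    unfolding DD_def
  proof (rule integral_mono)
    show "integrable lborel (\<lambda>u. exp (- \<bar>y\<bar> / b) * (\<bar>u\<bar>^0 * exp (- ?c * \<bar>u\<bar>)))"
      using hbi[of ?c 0] \<open>0 < ?c\<close> by (auto simp: has_bochner_integral_iff)
    show "integrable lborel (KK a b y)" using K_int by simp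
    fix u :: real
    have "\<bar>y - u\<bar> \<le> \<bar>y\<bar> + \<bar>u\<bar>" by simp
    then have "- \<bar>y\<bar> / b + - \<bar>u\<bar>/b \<le> - \<bar>y - u\<bar> / b" using b by (simp add: divide_simps)
    then have "exp (- \<bar>y\<bar> / b + - \<bar>u\<bar>/b) \<le> exp (- \<bar>y - u\<bar> / b)" by simp
    then have "exp (- \<bar>u\<bar> / a) * exp (- \<bar>y\<bar> / b + - \<bar>u\<bar>/b) \<le> exp (- \<bar>u\<bar> / a) * exp (- \<bar>y - u\<bar> / b)"
      by (intro mult_left_mono) auto
    moreover have "exp (- \<bar>y\<bar> / b) * (\<bar>u\<bar>^0 * exp (- ?c * \<bar>u\<bar>)) = exp (- \<bar>u\<bar> / a) * exp (- \<bar>y\<bar> / b + - \<bar>u\<bar>/b)"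
      by (simp add: exp_add[symmetric] field_simps)
    ultimately show "exp (- \<bar>y\<bar> / b) * (\<bar>u\<bar>^0 * exp (- ?c * \<bar>u\<bar>)) \<le> KK a b y u"
      by (simp add: KK_def)
  qed
  finally show ?thesis .
qed

lemma shift: "posterior_mean t0 a b x = t0 + NN a b (x - t0) / DD a b (x - t0)"
proof -
  let ?y = "x - t0"
  have num: "(\<integral>\<theta>. \<theta> * laplace_density t0 a \<theta> * laplace_density 0 b (x - \<theta>) \<partial>lborel)
      = (t0 * DD a b ?y + NN a b ?y) / (4*a*b)"
  proof -
    have "(\<integral>\<theta>. \<theta> * laplace_density t0 a \<theta> * laplace_density 0 b (x - \<theta>) \<partial>lborel)
      = \<bar>1\<bar> *\<^sub>R (\<integral>u. (t0 + 1*u) * laplace_density t0 a (t0 + 1*u) * laplace_density 0 b (x - (t0 + 1*u)) \<partial>lborel)"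
      by (rule lborel_integral_real_affine) auto
    also have "\<dots> = (\<integral>u. (t0 * KK a b ?y u + u * KK a b ?y u) / (4*a*b) \<partial>lborel)"
      by (subst abs_one, subst scaleR_one, intro Bochner_Integration.integral_cong) (auto simp: laplace_density_def KK_def field_simps)
    also have "\<dots> = (\<integral>u. t0 * KK a b ?y u + u * KK a b ?y u \<partial>lborel) / (4*a*b)"
      by simp
    also have "(\<integral>u. t0 * KK a b ?y u + u * KK a b ?y u \<partial>lborel) = t0 * DD a b ?y + NN a b ?y"
      using K_int uK_int unfolding DD_def NN_def by simp
    finally show ?thesis .
  qed
  have den: "(\<integral>\<theta>. laplace_density t0 a \<theta> * laplace_density 0 b (x - \<theta>) \<partial>lborel)
      = DD a b ?y / (4*a*b)"
  proof -
    have "(\<integral>\<theta>. laplace_density t0 a \<theta> * laplace_density 0 b (x - \<theta>) \<partial>lborel)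
      = \<bar>1\<bar> *\<^sub>R (\<integral>u. laplace_density t0 a (t0 + 1*u) * laplace_density 0 b (x - (t0 + 1*u)) \<partial>lborel)"
      by (rule lborel_integral_real_affine) auto
    also have "\<dots> = (\<integral>u. KK a b ?y u / (4*a*b) \<partial>lborel)"
      by (subst abs_one, subst scaleR_one, intro Bochner_Integration.integral_cong) (auto simp: laplace_density_def KK_def field_simps)
    also have "\<dots> = DD a b ?y / (4*a*b)"
      unfolding DD_def by simp
    finally show ?thesis .
  qed
  show ?thesis
    unfolding posterior_mean_def num den using a b DD_pos[of ?y]
    by (simp add: field_simps)
qed


lemma DD_lim: "(DD a b \<longlongrightarrow> DD a b 0) (at 0)"
  unfolding tendsto_at_iff_sequentially comp_def
proof (intro allI impI)
  fix X :: "nat \<Rightarrow> real" assume X: "X \<longlonglongrightarrow> 0"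
  show "(\<lambda>n. DD a b (X n)) \<longlonglongrightarrow> DD a b 0"
    unfolding DD_def
  proof (rule integral_dominated_convergence[where w = "\<lambda>u. \<bar>u\<bar>^0 * exp (- (1/a) * \<bar>u\<bar>)"])
    show "integrable lborel (\<lambda>u. \<bar>u\<bar>^0 * exp (- (1/a) * \<bar>u\<bar>))"
      using hbi[of "1/a" 0] a by (auto simp: has_bochner_integral_iff)
    show "AE u in lborel. norm (KK a b (X n) u) \<le> \<bar>u\<bar>^0 * exp (- (1/a) * \<bar>u\<bar>)" for n
      using a b by (auto simp: KK_def mult_le_cancel_left1)
    show "AE u in lborel. (\<lambda>n. KK a b (X n) u) \<longlonglongrightarrow> KK a b 0 u"
      unfolding KK_def using a b by (intro AE_I2 tendsto_intros X) auto
  qed auto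
qed

lemma diff_quot_lim:
  fixes u :: real assumes u: "u \<noteq> 0"
  shows "((\<lambda>y. (exp (- \<bar>y - u\<bar> / b) - exp (- \<bar>0 - u\<bar> / b)) / (y - 0)) \<longlongrightarrow> sgn u * exp (- \<bar>u\<bar> / b) / b) (at 0)"
proof -
  have "((\<lambda>y. exp (- \<bar>y - u\<bar> / b)) has_real_derivative sgn u * exp (- \<bar>u\<bar> / b) / b) (at 0)"
  proof (cases "u > 0")
    case True
    have "((\<lambda>y. exp ((y - u) / b)) has_real_derivative sgn u * exp (- \<bar>u\<bar> / b) / b) (at 0)"
      using b True by (auto intro!: derivative_eq_intros simp: sgn_if)
    then show ?thesis
      apply (rule has_field_derivative_transform_within_open[where S="{..<u}"])
      using True by (auto simp: sgn_if)
  next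
    case False
    with u have u': "u < 0" by simp
    have "((\<lambda>y. exp (- (y - u) / b)) has_real_derivative sgn u * exp (- \<bar>u\<bar> / b) / b) (at 0)"
      using b u' by (auto intro!: derivative_eq_intros simp: sgn_if)
    then show ?thesis
      apply (rule has_field_derivative_transform_within_open[where S="{u<..}"])
      using u' by (auto simp: sgn_if)
  qed
  then show ?thesis by (simp add: has_field_derivative_iff)
qed


lemma G_bound:
  fixes y u B :: real assumes y: "y \<noteq> 0" "\<bar>y\<bar> \<le> B"
  shows "\<bar>(u * KK a b y u - u * KK a b 0 u) / y\<bar>
     \<le> (exp (B/b) / b) * (\<bar>u\<bar>^1 * exp (- (1/a + 1/b) * \<bar>u\<bar>))"
proof -
  let ?s = "- \<bar>y - u\<bar> / b" and ?t = "- \<bar>0 - u\<bar> / b"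
  have st: "\<bar>?s - ?t\<bar> \<le> \<bar>y\<bar> / b"
  proof -
    have "\<bar>?s - ?t\<bar> = \<bar>\<bar>u\<bar> - \<bar>y - u\<bar>\<bar> / b" using b by (simp add: field_simps abs_div)
    also have "\<dots> \<le> \<bar>y\<bar> / b" using b by (intro divide_right_mono) auto
    finally show ?thesis .
  qed
  have mx: "max ?s ?t \<le> (B - \<bar>u\<bar>) / b"
  proof -
    have "\<bar>u\<bar> - \<bar>y\<bar> \<le> \<bar>y - u\<bar>" by linarith
    then have "?s \<le> (B - \<bar>u\<bar>) / b" using b y(2) by (simp add: field_simps)
    moreover have "?t \<le> (B - \<bar>u\<bar>) / b" using b y(2) by (simp add: field_simps)
    ultimately show ?thesis by simp
  qed
  have ed: "\<bar>exp ?s - exp ?t\<bar> \<le> (\<bar>y\<bar> / b) * exp ((B - \<bar>u\<bar>) / b)"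
  proof -
    have "\<bar>exp ?s - exp ?t\<bar> \<le> \<bar>?s - ?t\<bar> * exp (max ?s ?t)" by (rule exp_diff_bound)
    also have "\<dots> \<le> (\<bar>y\<bar> / b) * exp ((B - \<bar>u\<bar>) / b)"
      using st mx by (intro mult_mono) auto
    finally show ?thesis .
  qed
  have "(u * KK a b y u - u * KK a b 0 u) / y = (u * exp (- \<bar>u\<bar> / a)) * (exp ?s - exp ?t) / y"
    by (simp add: KK_def algebra_simps)
  then have "\<bar>(u * KK a b y u - u * KK a b 0 u) / y\<bar> = (\<bar>u\<bar> * exp (- \<bar>u\<bar> / a)) * \<bar>exp ?s - exp ?t\<bar> / \<bar>y\<bar>"
    by (simp only: abs_mult abs_divide abs_exp_cancel)
  also have "\<dots> \<le> (\<bar>u\<bar> * exp (- \<bar>u\<bar> / a)) * ((\<bar>y\<bar> / b) * exp ((B - \<bar>u\<bar>) / b)) / \<bar>y\<bar>"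
    by (intro divide_right_mono mult_left_mono ed) auto
  also have "\<dots> = (exp (B/b) / b) * (\<bar>u\<bar>^1 * exp (- (1/a + 1/b) * \<bar>u\<bar>))"
  proof -
    have e1: "exp ((B - \<bar>u\<bar>)/b) = exp (B/b) * exp (- \<bar>u\<bar>/b)"
      by (simp add: exp_add[symmetric] diff_divide_distrib)
    have e2: "exp (- (1/a + 1/b) * \<bar>u\<bar>) = exp (- \<bar>u\<bar>/a) * exp (- \<bar>u\<bar>/b)"
      by (simp add: exp_add[symmetric] ring_distribs)
    show ?thesis unfolding e1 e2 using y b by simp
  qed
  finally show ?thesis .
qed


lemma NN_lim: "((\<lambda>y. NN a b y / y) \<longlongrightarrow> (1/b) * (2 / (1/a + 1/b)^2)) (at 0)"
  unfolding tendsto_at_iff_sequentially comp_def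
proof (intro allI impI)
  let ?c = "1/a + 1/b"
  have c: "0 < ?c" using a b by (intro add_pos_pos) auto
  have hb1: "has_bochner_integral lborel (\<lambda>u. \<bar>u\<bar>^1 * exp (- ?c * \<bar>u\<bar>)) (2 / ?c^2)"
    using hbi[OF c, of 1] by (simp add: power2_eq_square)
  fix X :: "nat \<Rightarrow> real" assume X0: "\<forall>i. X i \<in> UNIV - {0}" and X: "X \<longlonglongrightarrow> 0"
  from X have "Bseq X" by (intro convergent_imp_Bseq convergentI)
  then obtain B where B: "\<And>n. \<bar>X n\<bar> \<le> B" by (metis BseqE real_norm_def)
  let ?G = "\<lambda>y u. (u * KK a b y u - u * KK a b 0 u) / y"
  have eq: "NN a b (X n) / X n = (\<integral>u. ?G (X n) u \<partial>lborel)" for n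
  proof -
    have "NN a b (X n) / X n = (NN a b (X n) - NN a b 0) / X n" by (simp add: NN0)
    also have "\<dots> = (\<integral>u. ?G (X n) u \<partial>lborel)"
      unfolding NN_def using uK_int[of "X n"] uK_int[of 0] by simp
    finally show ?thesis .
  qed
  have lim: "(1/b) * (2 / ?c^2) = (\<integral>u. (1/b) * (\<bar>u\<bar>^1 * exp (- ?c * \<bar>u\<bar>)) \<partial>lborel)"
    using hb1 by (simp add: has_bochner_integral_iff)
  show "(\<lambda>n. NN a b (X n) / X n) \<longlonglongrightarrow> (1/b) * (2 / ?c^2)"
    unfolding eq lim
  proof (rule integral_dominated_convergence[where w = "\<lambda>u. (exp (B/b) / b) * (\<bar>u\<bar>^1 * exp (- ?c * \<bar>u\<bar>))"])
    show "integrable lborel (\<lambda>u. (exp (B/b) / b) * (\<bar>u\<bar>^1 * exp (- ?c * \<bar>u\<bar>)))"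
      using hb1 by (auto simp: has_bochner_integral_iff)
    show "AE u in lborel. norm (?G (X n) u) \<le> (exp (B/b) / b) * (\<bar>u\<bar>^1 * exp (- ?c * \<bar>u\<bar>))" for n
      using G_bound[of "X n" B] X0 B by auto
    show "AE u in lborel. (\<lambda>n. ?G (X n) u) \<longlonglongrightarrow> (1/b) * (\<bar>u\<bar>^1 * exp (- ?c * \<bar>u\<bar>))"
      using AE_lborel_singleton[of "0::real"]
    proof eventually_elim
      fix u :: real assume u: "u \<noteq> 0"
      have q: "(\<lambda>n. (exp (- \<bar>X n - u\<bar> / b) - exp (- \<bar>0 - u\<bar> / b)) / (X n - 0)) \<longlonglongrightarrow> sgn u * exp (- \<bar>u\<bar> / b) / b"
        using diff_quot_lim[OF u] X0 X unfolding tendsto_at_iff_sequentially comp_def by blast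
      have "(\<lambda>n. (u * exp (- \<bar>u\<bar> / a)) * ((exp (- \<bar>X n - u\<bar> / b) - exp (- \<bar>0 - u\<bar> / b)) / (X n - 0)))
          \<longlonglongrightarrow> (u * exp (- \<bar>u\<bar> / a)) * (sgn u * exp (- \<bar>u\<bar> / b) / b)"
        by (rule tendsto_mult_left[OF q])
      note lim1 = this
      have eq2: "(u * exp (- \<bar>u\<bar> / a)) * (sgn u * exp (- \<bar>u\<bar> / b) / b) = (1/b) * (\<bar>u\<bar>^1 * exp (- ?c * \<bar>u\<bar>))"
      proof -
        have e2: "exp (- ?c * \<bar>u\<bar>) = exp (- \<bar>u\<bar>/a) * exp (- \<bar>u\<bar>/b)"
          by (simp add: exp_add[symmetric] ring_distribs)
        have "u * sgn u = \<bar>u\<bar>" by (simp add: abs_sgn)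
        then show ?thesis unfolding e2 by (simp add: algebra_simps)
      qed
      have eq3: "(u * exp (- \<bar>u\<bar> / a)) * ((exp (- \<bar>X n - u\<bar> / b) - exp (- \<bar>0 - u\<bar> / b)) / (X n - 0)) = ?G (X n) u" for n
        by (simp add: KK_def algebra_simps)
      from lim1[unfolded eq3 eq2] show "(\<lambda>n. ?G (X n) u) \<longlonglongrightarrow> (1/b) * (\<bar>u\<bar>^1 * exp (- ?c * \<bar>u\<bar>))" .
    qed
  qed auto
qed


lemma M_deriv: "((\<lambda>y. NN a b y / DD a b y) has_real_derivative a / (a + b)) (at 0)"
proof -
  let ?c = "1/a + 1/b"
  have c: "0 < ?c" using a b by (intro add_pos_pos) auto
  have "((\<lambda>y. (NN a b y / y) / DD a b y) \<longlongrightarrow> ((1/b) * (2 / ?c^2)) / DD a b 0) (at 0)"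
    using DD_pos[of 0] by (intro tendsto_divide NN_lim DD_lim) auto
  moreover have "((1/b) * (2 / ?c^2)) / DD a b 0 = a / (a + b)"
  proof -
    have gen: "((1/b) * (2 / cc^2)) / (2 / cc) = 1 / (b * cc)" if "cc \<noteq> 0" for cc :: real
      using that b by (simp add: field_simps power2_eq_square)
    have "((1/b) * (2 / ?c^2)) / (2 / ?c) = 1 / (b * ?c)"
      using c by (intro gen) simp
    also have "b * ?c = (a + b) / a" using a b by (simp add: field_simps)
    finally show ?thesis unfolding DD0 by simp
  qed
  moreover have "(\<lambda>y. (NN a b y / y) / DD a b y) = (\<lambda>y. (NN a b y / DD a b y - NN a b 0 / DD a b 0) / (y - 0))"
    by (simp add: NN0 fun_eq_iff)
  ultimately show ?thesis by (simp add: has_field_derivative_iff)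
qed

lemma main_deriv: "(posterior_mean t0 a b has_real_derivative a / (a + b)) (at t0)"
proof -
  have eq: "posterior_mean t0 a b = (\<lambda>x. t0 + (\<lambda>y. NN a b y / DD a b y) (x - t0))"
    by (simp add: fun_eq_iff shift)
  have "((\<lambda>x. t0 + (\<lambda>y. NN a b y / DD a b y) (x - t0)) has_real_derivative 0 + a / (a + b) * 1) (at t0)"
    by (intro DERIV_add DERIV_const DERIV_chain2[where f="\<lambda>y. NN a b y / DD a b y"]) (auto intro!: derivative_eq_intros M_deriv[simplified])
  then show ?thesis unfolding eq by simp
qed

end

theorem mainTheorem12:
  fixes sigma0 sigmaeps theta0 :: real
  assumes "sigma0 > 0" and "sigmaeps > 0" and "sigma0 \<noteq> sigmaeps"
  shows "(posterior_mean theta0 sigma0 sigmaeps has_real_derivative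
            sigma0 / (sigma0 + sigmaeps)) (at theta0)"
  using main_deriv[OF assms(1,2)] .

end
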